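(* Let $n\ge 3$ and let $BW_n$ be the gear graph on $2n+1$ vertices. Then $\varphi(BW_n^2)=\frac{1}{2}[(n+1)^2+5]$ if $n$ is even and $\frac{1}{2}(n+1)^2$ if $n$ is odd; $\varphi(BW_n^3)=n(n+1)$ if $n$ is even and $\frac{1}{2}(2n^2+3n+3)$ if $n$ is odd; $\varphi(BW_n^4)=n(2n-1)$.
   Context: All graphs are finite, simple and without isolated vertices. $\mathbb{N}_0$ denotes the set of non-negative integers; for finite $A,B\subseteq\mathbb{N}_0$, $A+B=\{a+b: a\in A, b\in B\}$. An integer additive set-indexer (IASI) of a graph $G$ is an injective map $f$ from $V(G)$ to the finite non-empty subsets of $\mathbb{N}_0$ such that the induced edge map $f^+(uv)=f(u)+f(v)$ is injective on $E(G)$. A weak IASI (WIASI) is an IASI $f$ with $|f^+(uv)|=\max(|f(u)|,|f(v)|)$ for every edge $uv$ (equivalently, for every edge at least one end vertex has a singleton label). A vertex or edge is mono-indexed if its set-label has cardinality $1$. Every graph admits a WIASI. The sparing number $\varphi(G)$ is the minimum, over all WIASIs of $G$, of the number of mono-indexed edges of $G$. The $r$-th power $G^r$ has vertex set $V(G)$, two distinct vertices being adjacent iff their distance in $G$ is at most $r$. The gear graph (bipartite wheel) $BW_n$ is obtained from the wheel $C_n+K_1$ (hub $u$, rim cycle $v_1v_2\cdots v_nv_1$) by inserting a new vertex $w_i$ on each rim edge $v_iv_{i+1}$ (indices mod $n$); thus $u$ is adjacent to each $v_i$, and $w_i$ is adjacent exactly to $v_i$ and $v_{i+1}$. *)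

theory Defs
  imports Complex_Main
begin

definition set_sum :: "nat set \<Rightarrow> nat set \<Rightarrow> nat set" where
  "set_sum A B = {a + b | a b. a \<in> A \<and> b \<in> B}"

definition iasi :: "'a set \<Rightarrow> 'a set set \<Rightarrow> ('a \<Rightarrow> nat set) \<Rightarrow> bool" where
  "iasi V E f \<longleftrightarrow>
     (\<forall>v\<in>V. finite (f v) \<and> f v \<noteq> {}) \<and>
     inj_on f V \<and>
     (\<forall>u v x y. {u, v} \<in> E \<longrightarrow> {x, y} \<in> E \<longrightarrow>
        set_sum (f u) (f v) = set_sum (f x) (f y) \<longrightarrow> {u, v} = {x, y})"

definition wiasi :: "'a set \<Rightarrow> 'a set set \<Rightarrow> ('a \<Rightarrow> nat set) \<Rightarrow> bool" where
  "wiasi V E f \<longleftrightarrow> iasi V E f \<and>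
     (\<forall>u v. {u, v} \<in> E \<longrightarrow> card (set_sum (f u) (f v)) = max (card (f u)) (card (f v)))"

definition mono_edges :: "'a set set \<Rightarrow> ('a \<Rightarrow> nat set) \<Rightarrow> 'a set set" where
  "mono_edges E f = {e \<in> E. \<exists>u v. e = {u, v} \<and> card (set_sum (f u) (f v)) = 1}"

definition sparing_number :: "'a set \<Rightarrow> 'a set set \<Rightarrow> nat" where
  "sparing_number V E = (LEAST k. \<exists>f. wiasi V E f \<and> card (mono_edges E f) = k)"

definition dist_le :: "'a set set \<Rightarrow> nat \<Rightarrow> 'a \<Rightarrow> 'a \<Rightarrow> bool" where
  "dist_le E r u v \<longleftrightarrow> (\<exists>p k. k \<le> r \<and> p 0 = u \<and> p k = v \<and>
       (\<forall>i<k. {p i, p (Suc i)} \<in> E))"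

definition power_edges :: "'a set \<Rightarrow> 'a set set \<Rightarrow> nat \<Rightarrow> 'a set set" where
  "power_edges V E r = {{u, v} | u v. u \<in> V \<and> v \<in> V \<and> u \<noteq> v \<and> dist_le E r u v}"

text \<open>Gear graph BW_n: hub 0, rim vertices v_i = i (1 \<le> i \<le> n),
  subdivision vertices w_i = n + i on the rim edge v_i v_(i+1) (indices mod n).\<close>
definition gear_vertices :: "nat \<Rightarrow> nat set" where
  "gear_vertices n = {0..2 * n}"

definition gear_edges :: "nat \<Rightarrow> nat set set" where
  "gear_edges n =
     {{0, i} | i. 1 \<le> i \<and> i \<le> n} \<union>
     {{i, n + i} | i. 1 \<le> i \<and> i \<le> n} \<union>
     {{n + i, (i mod n) + 1} | i. 1 \<le> i \<and> i \<le> n}"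

end

theory Submission
  imports Defs
begin

unbundle bit_operations_syntax

lemma sidon2:
  fixes a b c d :: nat
  assumes "a \<noteq> b" "c \<noteq> d" "(2::nat)^a + 2^b = 2^c + 2^d"
  shows "{a,b} = {c,d}"
proof -
  have e1: "(2::nat)^a + 2^b = 2^a OR 2^b"
    by (rule disjunctive_add_eq_or) (use assms(1) in \<open>auto simp: bit_eq_iff bit_simps\<close>)
  have e2: "(2::nat)^c + 2^d = 2^c OR 2^d"
    by (rule disjunctive_add_eq_or) (use assms(2) in \<open>auto simp: bit_eq_iff bit_simps\<close>)
  have "{k. bit ((2::nat)^a OR 2^b) k} = {a,b}" by (auto simp: bit_simps)
  moreover have "{k. bit ((2::nat)^c OR 2^d) k} = {c,d}" by (auto simp: bit_simps)
  ultimately show ?thesis using assms(3) e1 e2 by metis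
qed

lemma ss_comm: "set_sum A B = set_sum B A"
  unfolding set_sum_def by (auto; metis add.commute)

lemma ss_img: "set_sum A B = (\<lambda>(a,b). a+b) ` (A \<times> B)"
  unfolding set_sum_def by force

lemma ss_finite: "finite A \<Longrightarrow> finite B \<Longrightarrow> finite (set_sum A B)"
  by (simp add: ss_img)

lemma ss_single: "set_sum {a} B = (\<lambda>b. a + b) ` B"
  unfolding set_sum_def by auto

lemma ss_ge:
  assumes "finite A" "finite B" "A \<noteq> {}"
  shows "card B \<le> card (set_sum A B)"
proof -
  obtain a where a: "a \<in> A" using assms(3) by auto
  have "(\<lambda>b. a + b) ` B \<subseteq> set_sum A B" using a unfolding set_sum_def by auto
  then have "card ((\<lambda>b. a + b) ` B) \<le> card (set_sum A B)"
    by (intro card_mono ss_finite assms)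
  moreover have "card ((\<lambda>b. a + b) ` B) = card B" by (simp add: card_image inj_on_def)
  ultimately show ?thesis by simp
qed

lemma ss_gt:
  assumes "finite A" "finite B" "card A \<ge> 2" "card B \<ge> 2"
  shows "card B < card (set_sum A B)"
proof -
  have A0: "A \<noteq> {}" "B \<noteq> {}" using assms by auto
  obtain x where x: "x \<in> A" using A0 by auto
  have "card (A - {x}) \<ge> 1" using assms(1,3) x by simp
  then obtain y where "y \<in> A - {x}" by (metis all_not_in_conv card.empty not_one_le_zero)
  then have xy: "x \<in> A" "y \<in> A" "x \<noteq> y" using x by auto
  let ?a0 = "Min A" and ?a1 = "Max A" and ?b1 = "Max B"
  have a01: "?a0 < ?a1"
  proof -
    have "?a0 \<le> min x y" using xy assms(1) by simp
    moreover have "max x y \<le> ?a1" using xy assms(1) by simp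
    ultimately show ?thesis using xy(3) by linarith
  qed
  have mem: "?a0 \<in> A" "?a1 \<in> A" "?b1 \<in> B" using A0 assms by auto
  have sub: "insert (?a1 + ?b1) ((\<lambda>b. ?a0 + b) ` B) \<subseteq> set_sum A B"
    using mem unfolding set_sum_def by auto
  have notin: "?a1 + ?b1 \<notin> (\<lambda>b. ?a0 + b) ` B"
  proof
    assume "?a1 + ?b1 \<in> (\<lambda>b. ?a0 + b) ` B"
    then obtain b where "b \<in> B" "?a1 + ?b1 = ?a0 + b" by auto
    moreover have "b \<le> ?b1" using \<open>b \<in> B\<close> assms(2) by simp
    ultimately show False using a01 by linarith
  qed
  have "card (insert (?a1 + ?b1) ((\<lambda>b. ?a0 + b) ` B)) = Suc (card B)"
    using notin assms(2) by (simp add: card_image inj_on_def)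
  moreover have "card (insert (?a1 + ?b1) ((\<lambda>b. ?a0 + b) ` B)) \<le> card (set_sum A B)"
    by (intro card_mono ss_finite assms(1,2) sub)
  ultimately show ?thesis by simp
qed

lemma ss_Min:
  assumes "finite A" "finite B" "A \<noteq> {}" "B \<noteq> {}"
  shows "Min (set_sum A B) = Min A + Min B"
proof (rule Min_eqI)
  show "finite (set_sum A B)" using assms by (simp add: ss_finite)
  show "\<And>y. y \<in> set_sum A B \<Longrightarrow> Min A + Min B \<le> y"
    unfolding set_sum_def using assms by (auto intro: add_mono)
  have "Min A \<in> A" "Min B \<in> B" using assms by auto
  then show "Min A + Min B \<in> set_sum A B"
    unfolding set_sum_def by blast
qed

definition gE :: "nat set \<Rightarrow> (nat \<Rightarrow> nat \<Rightarrow> bool) \<Rightarrow> nat set set" where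
  "gE V R = {{a,b}| a b. a\<in>V \<and> b\<in>V \<and> a\<noteq>b \<and> R a b}"
definition gdeg :: "nat set \<Rightarrow> (nat \<Rightarrow> nat \<Rightarrow> bool) \<Rightarrow> nat \<Rightarrow> nat" where
  "gdeg V R s = card {t\<in>V. t\<noteq>s \<and> R s t}"
definition indep :: "(nat \<Rightarrow> nat \<Rightarrow> bool) \<Rightarrow> nat set \<Rightarrow> bool" where
  "indep R S \<longleftrightarrow> (\<forall>a\<in>S. \<forall>b\<in>S. a \<noteq> b \<longrightarrow> \<not> R a b)"

lemma gE_mem:
  assumes "\<And>a b. R a b \<Longrightarrow> R b a"
  shows "{a,b} \<in> gE V R \<longleftrightarrow> a\<in>V \<and> b\<in>V \<and> a\<noteq>b \<and> R a b"
  unfolding gE_def using assms by (auto simp: doubleton_eq_iff)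

lemma gE_elem: "e \<in> gE V R \<Longrightarrow> \<exists>a b. e = {a,b} \<and> a\<in>V \<and> b\<in>V \<and> a\<noteq>b \<and> R a b"
  unfolding gE_def by auto

lemma finite_gE: "finite V \<Longrightarrow> finite (gE V R)"
proof -
  assume "finite V"
  moreover have "gE V R \<subseteq> Pow V" unfolding gE_def by auto
  ultimately show ?thesis by (meson finite_Pow_iff finite_subset)
qed

lemma card_star:
  assumes sym: "\<And>a b. R a b \<Longrightarrow> R b a" and sV: "s \<in> V"
  shows "card {e\<in>gE V R. s\<in>e} = gdeg V R s"
proof -
  have "{e\<in>gE V R. s\<in>e} = (\<lambda>t. {s,t}) ` {t\<in>V. t\<noteq>s \<and> R s t}"
  proof
    show "{e\<in>gE V R. s\<in>e} \<subseteq> (\<lambda>t. {s,t}) ` {t\<in>V. t\<noteq>s \<and> R s t}"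
    proof
      fix e assume "e \<in> {e\<in>gE V R. s\<in>e}"
      then obtain a b where "e = {a,b}" "a\<in>V" "b\<in>V" "a\<noteq>b" "R a b" "s \<in> e"
        using gE_elem by blast
      show "e \<in> (\<lambda>t. {s,t}) ` {t\<in>V. t\<noteq>s \<and> R s t}"
      proof (cases "s = a")
        case True
        then show ?thesis using \<open>e = {a,b}\<close> \<open>b\<in>V\<close> \<open>a\<noteq>b\<close> \<open>R a b\<close>
          by (intro image_eqI[where x=b]) auto
      next
        case False
        then have "s = b" using \<open>s \<in> e\<close> \<open>e = {a,b}\<close> by auto
        then show ?thesis using \<open>e = {a,b}\<close> \<open>a\<in>V\<close> \<open>a\<noteq>b\<close> \<open>R a b\<close> sym
          by (intro image_eqI[where x=a]) auto
      qed
    qed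
    show "(\<lambda>t. {s,t}) ` {t\<in>V. t\<noteq>s \<and> R s t} \<subseteq> {e\<in>gE V R. s\<in>e}"
      unfolding gE_def using sV by blast
  qed
  moreover have "inj_on (\<lambda>t. {s,t}) {t\<in>V. t\<noteq>s \<and> R s t}"
    by (auto simp: inj_on_def doubleton_eq_iff)
  ultimately show ?thesis unfolding gdeg_def by (simp add: card_image)
qed


lemma handshake:
  assumes fin: "finite V" and sym: "\<And>a b. R a b \<Longrightarrow> R b a"
  shows "2 * card (gE V R) = (\<Sum>s\<in>V. gdeg V R s)"
proof -
  have fE: "finite (gE V R)" using fin by (rule finite_gE)
  have "(\<Sum>s\<in>V. gdeg V R s) = (\<Sum>s\<in>V. card {e\<in>gE V R. s\<in>e})"
    using card_star[OF sym] by simp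
  also have "\<dots> = (\<Sum>s\<in>V. \<Sum>e\<in>gE V R. if s\<in>e then 1 else 0)"
    using fE by (simp add: sum.inter_filter[symmetric])
  also have "\<dots> = (\<Sum>e\<in>gE V R. \<Sum>s\<in>V. if s\<in>e then 1 else 0)"
    by (rule sum.swap)
  also have "\<dots> = (\<Sum>e\<in>gE V R. 2)"
  proof (rule sum.cong)
    fix e assume "e \<in> gE V R"
    then obtain a b where ab: "e = {a,b}" "a\<in>V" "b\<in>V" "a\<noteq>b" using gE_elem by blast
    have "(\<Sum>s\<in>V. if s\<in>e then 1 else 0) = card {s\<in>V. s\<in>e}"
      using fin by (simp add: sum.inter_filter[symmetric])
    also have "{s\<in>V. s\<in>e} = {a,b}" using ab by auto
    finally show "(\<Sum>s\<in>V. if s\<in>e then 1 else 0) = (2::nat)" using ab by simp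
  qed simp
  finally show ?thesis by simp
qed

lemma split_count:
  assumes fin: "finite V" and sym: "\<And>a b. R a b \<Longrightarrow> R b a"
    and SV: "S \<subseteq> V" and ind: "indep R S"
  shows "card {e\<in>gE V R. e \<subseteq> V - S} + (\<Sum>s\<in>S. gdeg V R s) = card (gE V R)"
proof -
  let ?A = "{e\<in>gE V R. e \<subseteq> V - S}"
  let ?B = "\<Union>s\<in>S. {e\<in>gE V R. s\<in>e}"
  have fE: "finite (gE V R)" using fin by (rule finite_gE)
  have fS: "finite S" using fin SV finite_subset by blast
  have eq: "gE V R = ?A \<union> ?B"
  proof
    show "gE V R \<subseteq> ?A \<union> ?B"
    proof
      fix e assume e: "e \<in> gE V R"
      then have "e \<subseteq> V" using gE_elem by blast
      then show "e \<in> ?A \<union> ?B" using e by blast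
    qed
  qed auto
  have dis: "?A \<inter> ?B = {}" by auto
  have cB: "card ?B = (\<Sum>s\<in>S. card {e\<in>gE V R. s\<in>e})"
  proof (rule card_UN_disjoint[OF fS])
    show "\<forall>i\<in>S. finite {e \<in> gE V R. i \<in> e}" using fE by auto
    show "\<forall>i\<in>S. \<forall>j\<in>S. i \<noteq> j \<longrightarrow> {e \<in> gE V R. i \<in> e} \<inter> {e \<in> gE V R. j \<in> e} = {}"
    proof (intro ballI impI)
      fix i j assume ij: "i \<in> S" "j \<in> S" "i \<noteq> j"
      show "{e \<in> gE V R. i \<in> e} \<inter> {e \<in> gE V R. j \<in> e} = {}"
      proof (rule ccontr)
        assume "{e \<in> gE V R. i \<in> e} \<inter> {e \<in> gE V R. j \<in> e} \<noteq> {}"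
        then obtain e where "e \<in> gE V R" "i \<in> e" "j \<in> e" by blast
        then obtain a b where "e = {a,b}" "R a b" using gE_elem by blast
        then have "R i j \<or> R j i" using ij \<open>i\<in>e\<close> \<open>j\<in>e\<close> by auto
        then show False using ind ij sym unfolding indep_def by blast
      qed
    qed
  qed
  have "card (gE V R) = card ?A + card ?B"
    using eq dis fE by (metis (no_types, lifting) card_Un_disjoint finite_Un)
  moreover have "card ?B = (\<Sum>s\<in>S. gdeg V R s)"
    using cB card_star[OF sym] SV by (simp add: subset_iff)
  ultimately show ?thesis by simp
qed

lemma card_ge1: "finite A \<Longrightarrow> A \<noteq> {} \<Longrightarrow> card A \<ge> 1"
  by (simp add: Suc_leI card_gt_0_iff)

lemma lower:
  assumes sym: "\<And>a b. R a b \<Longrightarrow> R b a"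
    and w: "wiasi V (gE V R) f"
  defines "S \<equiv> {x\<in>V. card (f x) \<noteq> 1}"
  shows "indep R S \<and> mono_edges (gE V R) f = {e\<in>gE V R. e \<subseteq> V - S}"
proof -
  have fin: "\<And>v. v \<in> V \<Longrightarrow> finite (f v) \<and> f v \<noteq> {}" using w unfolding wiasi_def iasi_def by blast
  have cardc: "\<And>u v. {u,v} \<in> gE V R \<Longrightarrow> card (set_sum (f u) (f v)) = max (card (f u)) (card (f v))"
    using w unfolding wiasi_def by blast
  have key: "\<And>u v. u\<in>V \<Longrightarrow> v\<in>V \<Longrightarrow> u \<noteq> v \<Longrightarrow> R u v \<Longrightarrow> card (f u) = 1 \<or> card (f v) = 1"
  proof (rule ccontr)
    fix u v assume uv: "u\<in>V" "v\<in>V" "u \<noteq> v" "R u v" "\<not> (card (f u) = 1 \<or> card (f v) = 1)"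
    have "{u,v} \<in> gE V R" using uv gE_mem[of R, OF sym] by blast
    then have c: "card (set_sum (f u) (f v)) = max (card (f u)) (card (f v))" by (rule cardc)
    have g: "card (f u) \<ge> 2" "card (f v) \<ge> 2" using uv fin card_ge1[of "f u"] card_ge1[of "f v"] by auto
    have "card (f v) < card (set_sum (f u) (f v))" using ss_gt fin uv g by blast
    moreover have "card (f u) < card (set_sum (f v) (f u))" using ss_gt fin uv g by blast
    ultimately show False using c ss_comm[of "f u" "f v"] by simp
  qed
  have ind: "indep R S" unfolding indep_def S_def using key by blast
  have mono: "mono_edges (gE V R) f = {e\<in>gE V R. e \<subseteq> V - S}"
  proof (rule set_eqI, rule iffI)
    fix e assume "e \<in> mono_edges (gE V R) f"
    then obtain u v where e: "e \<in> gE V R" "e = {u,v}" "card (set_sum (f u) (f v)) = 1"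
      unfolding mono_edges_def by blast
    then obtain a b where ab: "e = {a,b}" "a\<in>V" "b\<in>V" "a\<noteq>b" "R a b" using gE_elem by blast
    have uvV: "u \<in> V" "v \<in> V" using ab e by auto
    have "card (f u) \<le> 1" using ss_ge[of "f v" "f u"] fin uvV e(3) ss_comm[of "f u" "f v"] by simp
    moreover have "card (f v) \<le> 1" using ss_ge[of "f u" "f v"] fin uvV e(3) by simp
    ultimately have "card (f u) = 1" "card (f v) = 1" using card_ge1 fin uvV by (meson le_antisym)+
    then show "e \<in> {e\<in>gE V R. e \<subseteq> V - S}" using e uvV unfolding S_def by auto
  next
    fix e assume "e \<in> {e\<in>gE V R. e \<subseteq> V - S}"
    then have e: "e \<in> gE V R" "e \<subseteq> V - S" by auto
    then obtain a b where ab: "e = {a,b}" "a\<in>V" "b\<in>V" "a\<noteq>b" "R a b" using gE_elem by blast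
    have "card (f a) = 1" "card (f b) = 1" using e ab unfolding S_def by auto
    then have "card (set_sum (f a) (f b)) = 1" using cardc e ab by simp
    then show "e \<in> mono_edges (gE V R) f" unfolding mono_edges_def using e ab by blast
  qed
  show ?thesis using ind mono by blast
qed

definition lab :: "nat set \<Rightarrow> nat \<Rightarrow> nat set" where
  "lab S x = (if x \<in> S then {2^x, 2^x + 1} else {2^x})"

lemma lab_min: "Min (lab S x) = 2^x"
  unfolding lab_def by auto

lemma lab_fin: "finite (lab S x) \<and> lab S x \<noteq> {}"
  unfolding lab_def by auto

lemma lab_card: "card (lab S x) = (if x \<in> S then 2 else 1)"
  unfolding lab_def by auto

lemma upper:
  assumes sym: "\<And>a b. R a b \<Longrightarrow> R b a"
    and SV: "S \<subseteq> V" and ind: "indep R S"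
  shows "wiasi V (gE V R) (lab S) \<and> mono_edges (gE V R) (lab S) = {e\<in>gE V R. e \<subseteq> V - S}"
proof -
  have inj: "inj_on (lab S) V"
  proof (rule inj_onI)
    fix x y assume "lab S x = lab S y"
    then have "(2::nat)^x = 2^y" using lab_min by metis
    then show "x = y" by simp
  qed
  have einj: "\<And>u v x y. {u, v} \<in> gE V R \<Longrightarrow> {x, y} \<in> gE V R \<Longrightarrow>
        set_sum (lab S u) (lab S v) = set_sum (lab S x) (lab S y) \<Longrightarrow> {u, v} = {x, y}"
  proof -
    fix u v x y assume a: "{u, v} \<in> gE V R" "{x, y} \<in> gE V R"
        "set_sum (lab S u) (lab S v) = set_sum (lab S x) (lab S y)"
    have "u \<noteq> v" "x \<noteq> y" using a(1,2) gE_mem[of R, OF sym] by blast+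
    have "Min (set_sum (lab S u) (lab S v)) = 2^u + 2^v" using ss_Min lab_fin lab_min by metis
    moreover have "Min (set_sum (lab S x) (lab S y)) = 2^x + 2^y" using ss_Min lab_fin lab_min by metis
    ultimately have "(2::nat)^u + 2^v = 2^x + 2^y" using a(3) by simp
    then show "{u, v} = {x, y}" using sidon2 \<open>u \<noteq> v\<close> \<open>x \<noteq> y\<close> by blast
  qed
  have cc: "\<And>u v. {u, v} \<in> gE V R \<Longrightarrow>
      card (set_sum (lab S u) (lab S v)) = max (card (lab S u)) (card (lab S v))"
  proof -
    fix u v assume a: "{u, v} \<in> gE V R"
    then have uv: "u \<in> V" "v \<in> V" "u \<noteq> v" "R u v" using gE_mem[of R, OF sym] by blast+
    have nb: "\<not> (u \<in> S \<and> v \<in> S)" using ind uv unfolding indep_def by blast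
    show "card (set_sum (lab S u) (lab S v)) = max (card (lab S u)) (card (lab S v))"
    proof (cases "u \<in> S")
      case True
      then have "v \<notin> S" using nb by blast
      then have "set_sum (lab S u) (lab S v) = (\<lambda>b. 2^v + b) ` lab S u"
        using ss_comm ss_single by (metis lab_def)
      then show ?thesis using True \<open>v \<notin> S\<close> by (simp add: card_image lab_card)
    next
      case False
      then have "set_sum (lab S u) (lab S v) = (\<lambda>b. 2^u + b) ` lab S v"
        using ss_single by (metis lab_def)
      then show ?thesis using False by (simp add: card_image lab_card)
    qed
  qed
  have w: "wiasi V (gE V R) (lab S)"
    unfolding wiasi_def iasi_def using lab_fin inj einj cc by blast
  have "{x\<in>V. card (lab S x) \<noteq> 1} = S" using SV by (auto simp: lab_card)
  then show ?thesis using w lower[OF sym w] by simp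
qed

lemma sparing_gen:
  assumes fin: "finite V" and sym: "\<And>a b. R a b \<Longrightarrow> R b a"
    and S0V: "S0 \<subseteq> V" and ind0: "indep R S0"
    and best: "\<And>S. S \<subseteq> V \<Longrightarrow> indep R S \<Longrightarrow> (\<Sum>s\<in>S. gdeg V R s) \<le> (\<Sum>s\<in>S0. gdeg V R s)"
  shows "sparing_number V (gE V R) + (\<Sum>s\<in>S0. gdeg V R s) = card (gE V R)"
proof -
  let ?k = "card (gE V R) - (\<Sum>s\<in>S0. gdeg V R s)"
  have sc0: "card {e\<in>gE V R. e \<subseteq> V - S0} + (\<Sum>s\<in>S0. gdeg V R s) = card (gE V R)"
    by (rule split_count[OF fin sym S0V ind0])
  have "sparing_number V (gE V R) = ?k"
    unfolding sparing_number_def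
  proof (rule Least_equality)
    show "\<exists>f. wiasi V (gE V R) f \<and> card (mono_edges (gE V R) f) = ?k"
      using upper[OF sym S0V ind0] sc0 by (intro exI[of _ "lab S0"]) simp
  next
    fix k assume "\<exists>f. wiasi V (gE V R) f \<and> card (mono_edges (gE V R) f) = k"
    then obtain f where f: "wiasi V (gE V R) f" "card (mono_edges (gE V R) f) = k" by blast
    let ?S = "{x\<in>V. card (f x) \<noteq> 1}"
    have l: "indep R ?S" "mono_edges (gE V R) f = {e\<in>gE V R. e \<subseteq> V - ?S}"
      using lower[OF sym f(1)] by auto
    have "card {e\<in>gE V R. e \<subseteq> V - ?S} + (\<Sum>s\<in>?S. gdeg V R s) = card (gE V R)"
      by (rule split_count[OF fin sym _ l(1)]) auto
    moreover have "(\<Sum>s\<in>?S. gdeg V R s) \<le> (\<Sum>s\<in>S0. gdeg V R s)" using best l(1) by auto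
    ultimately show "?k \<le> k" using f(2) l(2) by simp
  qed
  then show ?thesis using sc0 by linarith
qed




definition nx :: "nat \<Rightarrow> nat \<Rightarrow> nat" where "nx n j = (if j = n then 1 else j + 1)"
definition pv :: "nat \<Rightarrow> nat \<Rightarrow> nat" where "pv n j = (if j = 1 then n else j - 1)"

definition gadj :: "nat \<Rightarrow> nat \<Rightarrow> nat \<Rightarrow> bool" where
  "gadj n x y \<longleftrightarrow> (x = 0 \<and> 1 \<le> y \<and> y \<le> n) \<or> (y = 0 \<and> 1 \<le> x \<and> x \<le> n) \<or>
     (1 \<le> x \<and> x \<le> n \<and> n < y \<and> y \<le> 2*n \<and> (x = y - n \<or> x = nx n (y - n))) \<or>
     (1 \<le> y \<and> y \<le> n \<and> n < x \<and> x \<le> 2*n \<and> (y = x - n \<or> y = nx n (x - n)))"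

definition gd :: "nat \<Rightarrow> nat \<Rightarrow> nat \<Rightarrow> nat" where
  "gd n a b = (if a = b then 0
    else if a = 0 then (if b \<le> n then 1 else 2)
    else if b = 0 then (if a \<le> n then 1 else 2)
    else if a \<le> n \<and> b \<le> n then 2
    else if a \<le> n then (if a = b - n \<or> a = nx n (b - n) then 1 else 3)
    else if b \<le> n then (if b = a - n \<or> b = nx n (a - n) then 1 else 3)
    else (if b - n = nx n (a - n) \<or> a - n = nx n (b - n) then 2 else 4))"

lemma nx_range: "1 \<le> j \<Longrightarrow> j \<le> n \<Longrightarrow> 1 \<le> nx n j \<and> nx n j \<le> n"
  unfolding nx_def by auto
lemma nx_ne: "2 \<le> n \<Longrightarrow> 1 \<le> j \<Longrightarrow> j \<le> n \<Longrightarrow> nx n j \<noteq> j"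
  unfolding nx_def by auto
lemma nx_inj: "1 \<le> j \<Longrightarrow> j \<le> n \<Longrightarrow> 1 \<le> k \<Longrightarrow> k \<le> n \<Longrightarrow> nx n j = nx n k \<Longrightarrow> j = k"
  unfolding nx_def by (cases "j = n"; cases "k = n"; simp)
lemma pv_range: "1 \<le> j \<Longrightarrow> j \<le> n \<Longrightarrow> 1 \<le> pv n j \<and> pv n j \<le> n"
  unfolding pv_def by auto
lemma nx_pv: "1 \<le> j \<Longrightarrow> j \<le> n \<Longrightarrow> nx n (pv n j) = j"
  unfolding pv_def nx_def by auto
lemma pv_nx: "1 \<le> j \<Longrightarrow> j \<le> n \<Longrightarrow> pv n (nx n j) = j"
  unfolding pv_def nx_def by auto

lemma gd_sym: "gd n a b = gd n b a"
proof -
  consider "a = b" | "a \<noteq> b" "a = 0" | "a \<noteq> b" "b = 0" | "a \<noteq> b" "a \<noteq> 0" "b \<noteq> 0" "a \<le> n" "b \<le> n"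
    | "a \<noteq> b" "a \<noteq> 0" "b \<noteq> 0" "a \<le> n" "\<not> b \<le> n"
    | "a \<noteq> b" "a \<noteq> 0" "b \<noteq> 0" "\<not> a \<le> n" "b \<le> n"
    | "a \<noteq> b" "a \<noteq> 0" "b \<noteq> 0" "\<not> a \<le> n" "\<not> b \<le> n" by blast
  then show ?thesis
  proof cases
    case 7 then show ?thesis unfolding gd_def by (simp add: disj_commute)
  qed (simp_all add: gd_def)
qed


lemma gd_refl[simp]: "gd n a a = 0" unfolding gd_def by simp
lemma gd_0r: "1 \<le> i \<Longrightarrow> i \<le> n \<Longrightarrow> gd n 0 i = 1" unfolding gd_def by simp
lemma gd_r0: "1 \<le> i \<Longrightarrow> i \<le> n \<Longrightarrow> gd n i 0 = 1" unfolding gd_def by simp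
lemma gd_0w: "1 \<le> j \<Longrightarrow> gd n 0 (n+j) = 2" unfolding gd_def by simp
lemma gd_w0: "1 \<le> j \<Longrightarrow> gd n (n+j) 0 = 2" unfolding gd_def by simp
lemma gd_rr: "1 \<le> i \<Longrightarrow> i \<le> n \<Longrightarrow> 1 \<le> k \<Longrightarrow> k \<le> n \<Longrightarrow> gd n i k = (if i = k then 0 else 2)"
  unfolding gd_def by simp
lemma gd_rw: "1 \<le> i \<Longrightarrow> i \<le> n \<Longrightarrow> 1 \<le> j \<Longrightarrow> gd n i (n+j) = (if i = j \<or> i = nx n j then 1 else 3)"
  unfolding gd_def by simp
lemma gd_wr: "1 \<le> i \<Longrightarrow> i \<le> n \<Longrightarrow> 1 \<le> j \<Longrightarrow> gd n (n+j) i = (if i = j \<or> i = nx n j then 1 else 3)"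
  unfolding gd_def by auto
lemma gd_ww: "1 \<le> j \<Longrightarrow> 1 \<le> k \<Longrightarrow>
   gd n (n+j) (n+k) = (if j = k then 0 else if k = nx n j \<or> j = nx n k then 2 else 4)"
  unfolding gd_def by simp
lemma gd_le4: "gd n a b \<le> 4"
proof -
  consider "a = b" | "a \<noteq> b" "a = 0" | "a \<noteq> b" "b = 0" | "a \<noteq> b" "a \<noteq> 0" "b \<noteq> 0" "a \<le> n" "b \<le> n"
    | "a \<noteq> b" "a \<noteq> 0" "b \<noteq> 0" "a \<le> n" "\<not> b \<le> n"
    | "a \<noteq> b" "a \<noteq> 0" "b \<noteq> 0" "\<not> a \<le> n" "b \<le> n"
    | "a \<noteq> b" "a \<noteq> 0" "b \<noteq> 0" "\<not> a \<le> n" "\<not> b \<le> n" by blast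
  then show ?thesis by cases (simp_all add: gd_def)
qed

lemma inc_consec:
  assumes "1 \<le> j" "j \<le> n" "1 \<le> k" "k \<le> n" "j \<noteq> k"
    "i = j \<or> i = nx n j" "i = k \<or> i = nx n k"
  shows "k = nx n j \<or> j = nx n k"
  using assms nx_inj by metis

lemma vcases:
  fixes a n :: nat
  assumes "a \<le> 2*n"
  obtains "a = 0" | "1 \<le> a" "a \<le> n" | k where "a = n + k" "1 \<le> k" "k \<le> n"
proof (cases "a = 0")
  case True then show ?thesis using that(1) by blast
next
  case False
  show ?thesis
  proof (cases "a \<le> n")
    case True then have "1 \<le> a" using False by linarith
    then show ?thesis using that(2) True by blast
  next
    case F2: False
    then have "a = n + (a - n)" "1 \<le> a - n" "a - n \<le> n" using assms by auto
    then show ?thesis using that(3) by blast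
  qed
qed

lemma lip1:
  assumes n: "n \<ge> 3" and i: "1 \<le> i" "i \<le> n" and a: "a \<le> 2*n"
  shows "gd n a 0 \<le> gd n a i + 1 \<and> gd n a i \<le> gd n a 0 + 1"
  using a
proof (cases rule: vcases)
  case 1 then show ?thesis using i by (simp add: gd_0r)
next
  case 2 then show ?thesis using i by (simp add: gd_rr gd_r0)
next
  case (3 k) then show ?thesis using i by (simp add: gd_wr gd_w0)
qed

lemma lip2:
  assumes n: "n \<ge> 3" and j: "1 \<le> j" "j \<le> n" and inc: "i = j \<or> i = nx n j" and a: "a \<le> 2*n"
  shows "gd n a i \<le> gd n a (n+j) + 1 \<and> gd n a (n+j) \<le> gd n a i + 1"
proof -
  have i: "1 \<le> i" "i \<le> n" using inc j nx_range by auto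
  show ?thesis using a
  proof (cases rule: vcases)
    case 1 then show ?thesis using i j by (simp add: gd_0r gd_0w)
  next
    case 2 then show ?thesis using i j inc by (auto simp: gd_rr gd_rw)
  next
    case (3 k)
    show ?thesis
    proof (cases "k = j")
      case True then show ?thesis using 3 i j inc by (simp add: gd_ww gd_wr)
    next
      case False
      have c: "\<not> (j = nx n k \<or> k = nx n j) \<Longrightarrow> \<not> (i = k \<or> i = nx n k)"
        using inc_consec[OF 3(2,3) j False] inc by blast
      show ?thesis using 3 i j False c by (simp add: gd_ww gd_wr)
    qed
  qed
qed

lemma mod_nx: "1 \<le> i \<Longrightarrow> i \<le> n \<Longrightarrow> i mod n + 1 = nx n i"
  unfolding nx_def by (cases "i = n") auto

lemma ge_cases:
  assumes "{x,y} \<in> gear_edges n"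
  shows "(x = 0 \<and> 1 \<le> y \<and> y \<le> n) \<or> (y = 0 \<and> 1 \<le> x \<and> x \<le> n) \<or>
    (\<exists>j. 1 \<le> j \<and> j \<le> n \<and> (((x = j \<or> x = nx n j) \<and> y = n + j) \<or> ((y = j \<or> y = nx n j) \<and> x = n + j)))"
proof -
  from assms consider i where "1\<le>i" "i\<le>n" "{x,y} = {0,i}" | i where "1\<le>i" "i\<le>n" "{x,y} = {i,n+i}"
    | i where "1\<le>i" "i\<le>n" "{x,y} = {n+i, i mod n + 1}"
    unfolding gear_edges_def by blast
  then show ?thesis
  proof cases
    case 1 then show ?thesis unfolding doubleton_eq_iff by blast
  next
    case 2 then show ?thesis unfolding doubleton_eq_iff by blast
  next
    case 3 then have "{x,y} = {n+i, nx n i}" using mod_nx by simp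
    then show ?thesis using 3(1,2) unfolding doubleton_eq_iff by blast
  qed
qed

lemma e0r: "1 \<le> i \<Longrightarrow> i \<le> n \<Longrightarrow> {0,i} \<in> gear_edges n"
  unfolding gear_edges_def by blast
lemma erw: "1 \<le> j \<Longrightarrow> j \<le> n \<Longrightarrow> {j, n+j} \<in> gear_edges n"
  unfolding gear_edges_def by blast
lemma erw2: "1 \<le> j \<Longrightarrow> j \<le> n \<Longrightarrow> {nx n j, n+j} \<in> gear_edges n"
proof -
  assume j: "1 \<le> j" "j \<le> n"
  have "{n+j, j mod n + 1} \<in> gear_edges n" unfolding gear_edges_def using j by blast
  then show ?thesis using mod_nx[OF j] by (simp add: insert_commute)
qed

lemma gd_step:
  assumes n: "n \<ge> 3" and a: "a \<le> 2*n" and e: "{x,y} \<in> gear_edges n"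
  shows "gd n a y \<le> gd n a x + 1 \<and> y \<le> 2*n"
proof -
  from ge_cases[OF e] consider "x = 0" "1 \<le> y" "y \<le> n" | "y = 0" "1 \<le> x" "x \<le> n"
    | j where "1 \<le> j" "j \<le> n" "x = j \<or> x = nx n j" "y = n + j"
    | j where "1 \<le> j" "j \<le> n" "y = j \<or> y = nx n j" "x = n + j" by blast
  then show ?thesis
  proof cases
    case 1 then show ?thesis using lip1[OF n _ _ a] by auto
  next
    case 2 then show ?thesis using lip1[OF n _ _ a] by auto
  next
    case (3 j) then show ?thesis using lip2[OF n 3(1,2) _ a] by auto
  next
    case (4 j) then show ?thesis using lip2[OF n 4(1,2) _ a] nx_range[OF 4(1,2)] by auto
  qed
qed

lemma dist_gd:
  assumes n: "n \<ge> 3" and a: "a \<le> 2*n" and d: "dist_le (gear_edges n) r a b"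
  shows "gd n a b \<le> r"
proof -
  obtain p k where pk: "k \<le> r" "p 0 = a" "p k = b" "\<forall>i<k. {p i, p (Suc i)} \<in> gear_edges n"
    using d unfolding dist_le_def by blast
  have "\<forall>i. i \<le> k \<longrightarrow> gd n a (p i) \<le> i \<and> p i \<le> 2*n"
  proof (intro allI)
    fix i show "i \<le> k \<longrightarrow> gd n a (p i) \<le> i \<and> p i \<le> 2*n"
    proof (induction i)
      case 0 then show ?case using pk a by simp
    next
      case (Suc i)
      show ?case
      proof
        assume "Suc i \<le> k"
        then have "gd n a (p i) \<le> i" "{p i, p (Suc i)} \<in> gear_edges n" using Suc pk by auto
        then show "gd n a (p (Suc i)) \<le> Suc i \<and> p (Suc i) \<le> 2*n" using gd_step[OF n a] by fastforce
      qed
    qed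
  qed
  then show ?thesis using pk by auto
qed

lemma dl_refl: "dist_le E r a a"
  unfolding dist_le_def by (rule exI[of _ "\<lambda>_. a"], rule exI[of _ 0]) simp

lemma dl_snoc:
  assumes "dist_le E r a b" "{b,c} \<in> E"
  shows "dist_le E (Suc r) a c"
proof -
  obtain p k where pk: "k \<le> r" "p 0 = a" "p k = b" "\<forall>i<k. {p i, p (Suc i)} \<in> E"
    using assms(1) unfolding dist_le_def by blast
  let ?q = "\<lambda>i. if i \<le> k then p i else c"
  have "\<forall>i<Suc k. {?q i, ?q (Suc i)} \<in> E"
  proof (intro allI impI)
    fix i assume "i < Suc k"
    then show "{?q i, ?q (Suc i)} \<in> E"
      using pk assms(2) by (cases "i = k") auto
  qed
  moreover have "?q 0 = a" "?q (Suc k) = c" using pk by auto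
  ultimately show ?thesis unfolding dist_le_def using pk(1)
    by (intro exI[of _ ?q] exI[of _ "Suc k"]) auto
qed

lemma dl_mono: "dist_le E r a b \<Longrightarrow> r \<le> s \<Longrightarrow> dist_le E s a b"
  unfolding dist_le_def by (metis (no_types, lifting) le_trans)

lemma dl_sym:
  assumes "dist_le E r a b" shows "dist_le E r b a"
proof -
  obtain p k where pk: "k \<le> r" "p 0 = a" "p k = b" "\<forall>i<k. {p i, p (Suc i)} \<in> E"
    using assms unfolding dist_le_def by blast
  let ?q = "\<lambda>i. p (k - i)"
  have "\<forall>i<k. {?q i, ?q (Suc i)} \<in> E"
  proof (intro allI impI)
    fix i assume i: "i < k"
    have "{p (k - Suc i), p (Suc (k - Suc i))} \<in> E" using pk i by auto
    moreover have "Suc (k - Suc i) = k - i" using i by auto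
    ultimately show "{?q i, ?q (Suc i)} \<in> E" by (simp add: insert_commute)
  qed
  then show ?thesis unfolding dist_le_def using pk
    by (intro exI[of _ ?q] exI[of _ k]) auto
qed

lemma dl_edge: "{a,b} \<in> E \<Longrightarrow> dist_le E (Suc 0) a b"
  using dl_snoc[OF dl_refl[of E 0 a]] by simp


lemma ecomm: "{a,b} \<in> E \<Longrightarrow> {b,a} \<in> E" by (simp add: insert_commute)

lemma gd_dl_le:
  assumes n: "n \<ge> 3" and a: "a \<le> 2*n" and b: "b \<le> 2*n" and ab: "a \<le> b"
  shows "dist_le (gear_edges n) (gd n a b) a b"
proof -
  let ?E = "gear_edges n"
  have e1: "\<And>j. 1 \<le> j \<Longrightarrow> j \<le> n \<Longrightarrow> {0,j} \<in> ?E" "\<And>j. 1 \<le> j \<Longrightarrow> j \<le> n \<Longrightarrow> {j,0} \<in> ?E"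
    using e0r by (auto simp: insert_commute)
  have e2: "\<And>j. 1 \<le> j \<Longrightarrow> j \<le> n \<Longrightarrow> {j,n+j} \<in> ?E" "\<And>j. 1 \<le> j \<Longrightarrow> j \<le> n \<Longrightarrow> {n+j,j} \<in> ?E"
    using erw by (auto simp: insert_commute)
  have e3: "\<And>j. 1 \<le> j \<Longrightarrow> j \<le> n \<Longrightarrow> {nx n j,n+j} \<in> ?E" "\<And>j. 1 \<le> j \<Longrightarrow> j \<le> n \<Longrightarrow> {n+j,nx n j} \<in> ?E"
    using erw2 by (auto simp: insert_commute)
  have fin: "\<And>m. dist_le ?E m a b \<Longrightarrow> gd n a b = m \<Longrightarrow> ?thesis" by simp
  show ?thesis using a
  proof (cases rule: vcases)
    case 1
    show ?thesis using b
    proof (cases rule: vcases)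
      case 1 then show ?thesis using \<open>a = 0\<close> dl_refl by simp
    next
      case 2 then show ?thesis using \<open>a = 0\<close> gd_0r[OF 2] dl_edge[OF e1(1)[OF 2]] by simp
    next
      case (3 k)
      have "dist_le ?E 2 a b" using dl_snoc[OF dl_edge[OF e1(1)[OF 3(2,3)]] e2(1)[OF 3(2,3)]] 1 3 by (simp add: eval_nat_numeral)
      then show ?thesis using 1 3 gd_0w[OF 3(2)] by simp
    qed
  next
    case 2
    show ?thesis using b
    proof (cases rule: vcases)
      case 1 then show ?thesis using 2 ab by simp
    next
      case b2: 2
      show ?thesis
      proof (cases "a = b")
        case True then show ?thesis using dl_refl by simp
      next
        case False
        have "dist_le ?E 2 a b" using dl_snoc[OF dl_edge[OF e1(2)[OF 2]] e1(1)[OF b2]] by (simp add: eval_nat_numeral)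
        then show ?thesis using gd_rr[OF 2 b2] False by simp
      qed
    next
      case (3 k)
      show ?thesis
      proof (cases "a = k \<or> a = nx n k")
        case True
        then have "{a,b} \<in> ?E" using e2(1)[OF 3(2,3)] e3(1)[OF 3(2,3)] 3(1) by auto
        then show ?thesis using dl_edge gd_rw[OF 2 3(2)] 3(1) True by simp
      next
        case False
        have "dist_le ?E 3 a b"
          using dl_snoc[OF dl_snoc[OF dl_edge[OF e1(2)[OF 2]] e1(1)[OF 3(2,3)]] e2(1)[OF 3(2,3)]] 3(1)
          by (simp add: eval_nat_numeral)
        then show ?thesis using gd_rw[OF 2 3(2)] 3(1) False by simp
      qed
    qed
  next
    case (3 j)
    show ?thesis using b
    proof (cases rule: vcases)
      case 1 then show ?thesis using 3 ab by simp
    next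
      case 2 then show ?thesis using 3 ab by simp
    next
      case (3 k)
      note j = \<open>a = n + j\<close> \<open>1 \<le> j\<close> \<open>j \<le> n\<close>
      consider "j = k" | "j \<noteq> k" "k = nx n j" | "j \<noteq> k" "k \<noteq> nx n j" "j = nx n k"
        | "j \<noteq> k" "k \<noteq> nx n j" "j \<noteq> nx n k" by blast
      then show ?thesis
      proof cases
        case 1 then show ?thesis using j 3 dl_refl by simp
      next
        case c: 2
        have ee: "{nx n j, n+k} \<in> ?E" using e2(1)[OF 3(2,3)] c by simp
        have "dist_le ?E 2 a b"
          using dl_snoc[OF dl_edge[OF e3(2)[OF j(2,3)]] ee] c j 3 by (simp add: eval_nat_numeral)
        then show ?thesis using gd_ww[OF j(2) 3(2)] c j 3 by simp
      next
        case c: 3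
        have ee: "{j, n+k} \<in> ?E" using e3(1)[OF 3(2,3)] c by simp
        have "dist_le ?E 2 a b"
          using dl_snoc[OF dl_edge[OF e2(2)[OF j(2,3)]] ee] c j 3 by (simp add: eval_nat_numeral)
        then show ?thesis using gd_ww[OF j(2) 3(2)] c j 3 by simp
      next
        case c: 4
        have "dist_le ?E 4 a b"
          using dl_snoc[OF dl_snoc[OF dl_snoc[OF dl_edge[OF e2(2)[OF j(2,3)]] e1(2)[OF j(2,3)]]
              e1(1)[OF 3(2,3)]] e2(1)[OF 3(2,3)]] c j 3
          by (simp add: eval_nat_numeral)
        then show ?thesis using gd_ww[OF j(2) 3(2)] c j 3 by simp
      qed
    qed
  qed
qed

lemma dist_iff:
  assumes n: "n \<ge> 3" and a: "a \<le> 2*n" and b: "b \<le> 2*n"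
  shows "dist_le (gear_edges n) r a b \<longleftrightarrow> gd n a b \<le> r"
proof
  assume "dist_le (gear_edges n) r a b" then show "gd n a b \<le> r" by (rule dist_gd[OF n a])
next
  assume r: "gd n a b \<le> r"
  have "dist_le (gear_edges n) (gd n a b) a b"
  proof (cases "a \<le> b")
    case True then show ?thesis by (rule gd_dl_le[OF n a b])
  next
    case False then have ba: "b \<le> a" by simp
    have "dist_le (gear_edges n) (gd n b a) b a" by (rule gd_dl_le[OF n b a ba])
    then have "dist_le (gear_edges n) (gd n b a) a b" by (rule dl_sym)
    then show ?thesis by (simp only: gd_sym[of n b a])
  qed
  then show "dist_le (gear_edges n) r a b" using r by (rule dl_mono)
qed

lemma power_eq:
  assumes n: "n \<ge> 3"
  shows "power_edges (gear_vertices n) (gear_edges n) r = gE {0..2*n} (\<lambda>a b. gd n a b \<le> r)"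
proof -
  have i: "\<And>u v. u \<in> {0..2*n} \<Longrightarrow> v \<in> {0..2*n} \<Longrightarrow> dist_le (gear_edges n) r u v = (gd n u v \<le> r)"
    using dist_iff[OF n] by simp
  show ?thesis unfolding power_edges_def gE_def gear_vertices_def
    by (rule Collect_cong) (use i in blast)
qed




lemma pv_ne: "2 \<le> n \<Longrightarrow> 1 \<le> j \<Longrightarrow> j \<le> n \<Longrightarrow> pv n j \<noteq> j"
  unfolding pv_def by auto
lemma nx_ne_pv: "3 \<le> n \<Longrightarrow> 1 \<le> j \<Longrightarrow> j \<le> n \<Longrightarrow> nx n j \<noteq> pv n j"
  unfolding pv_def nx_def by auto
lemma nx_eq_iff: "1 \<le> j \<Longrightarrow> j \<le> n \<Longrightarrow> 1 \<le> k \<Longrightarrow> k \<le> n \<Longrightarrow> (j = nx n k) = (k = pv n j)"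
  using nx_pv pv_nx by metis

lemma nbr_W3:
  assumes n: "n \<ge> 3" and j: "1 \<le> j" "j \<le> n"
  shows "{t\<in>{0..2*n}. t \<noteq> n+j \<and> gd n (n+j) t \<le> 3} = insert (n + nx n j) (insert (n + pv n j) {0..n})"
proof (rule set_eqI)
  fix x
  have r: "1 \<le> nx n j" "nx n j \<le> n" "1 \<le> pv n j" "pv n j \<le> n" using nx_range[OF j] pv_range[OF j] by auto
  have d: "nx n j \<noteq> j" "pv n j \<noteq> j" using nx_ne pv_ne n j by auto
  show "x \<in> {t\<in>{0..2*n}. t \<noteq> n+j \<and> gd n (n+j) t \<le> 3} \<longleftrightarrow> x \<in> insert (n + nx n j) (insert (n + pv n j) {0..n})"
  proof (cases "x \<le> 2*n")
    case False then show ?thesis using r by auto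
  next
    case True
    then show ?thesis
    proof (cases rule: vcases)
      case 1 then show ?thesis using j by (simp add: gd_w0)
    next
      case 2 then show ?thesis using j by (simp add: gd_wr)
    next
      case (3 k)
      have e: "(j = nx n k) = (k = pv n j)" using nx_eq_iff[OF j 3(2,3)] .
      show ?thesis using 3 j d e by (auto simp: gd_ww)
    qed
  qed
qed

lemma nbr_R2:
  assumes n: "n \<ge> 3" and i: "1 \<le> i" "i \<le> n"
  shows "{t\<in>{0..2*n}. t \<noteq> i \<and> gd n i t \<le> 2} = insert 0 (insert (n+i) (insert (n + pv n i) ({1..n} - {i})))"
proof (rule set_eqI)
  fix x
  have r: "1 \<le> pv n i" "pv n i \<le> n" using pv_range[OF i] by auto
  show "x \<in> {t\<in>{0..2*n}. t \<noteq> i \<and> gd n i t \<le> 2} \<longleftrightarrow> x \<in> insert 0 (insert (n+i) (insert (n + pv n i) ({1..n} - {i})))"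
  proof (cases "x \<le> 2*n")
    case False then show ?thesis using r i by auto
  next
    case True
    then show ?thesis
    proof (cases rule: vcases)
      case 1 then show ?thesis using i by (simp add: gd_r0)
    next
      case 2 then show ?thesis using i r by (auto simp: gd_rr)
    next
      case (3 k)
      have e: "(i = nx n k) = (k = pv n i)" using nx_eq_iff[OF i 3(2,3)] .
      show ?thesis using 3 i e by (auto simp: gd_rw)
    qed
  qed
qed

lemma nbr_W2:
  assumes n: "n \<ge> 3" and j: "1 \<le> j" "j \<le> n"
  shows "{t\<in>{0..2*n}. t \<noteq> n+j \<and> gd n (n+j) t \<le> 2} = {0, j, nx n j, n + nx n j, n + pv n j}"
proof (rule set_eqI)
  fix x
  have r: "1 \<le> nx n j" "nx n j \<le> n" "1 \<le> pv n j" "pv n j \<le> n" using nx_range[OF j] pv_range[OF j] by auto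
  have d: "nx n j \<noteq> j" "pv n j \<noteq> j" using nx_ne pv_ne n j by auto
  show "x \<in> {t\<in>{0..2*n}. t \<noteq> n+j \<and> gd n (n+j) t \<le> 2} \<longleftrightarrow> x \<in> {0, j, nx n j, n + nx n j, n + pv n j}"
  proof (cases "x \<le> 2*n")
    case False then show ?thesis using r j by auto
  next
    case True
    then show ?thesis
    proof (cases rule: vcases)
      case 1 then show ?thesis using j by (simp add: gd_w0)
    next
      case 2 then show ?thesis using j r by (auto simp: gd_wr)
    next
      case (3 k)
      have e: "(j = nx n k) = (k = pv n j)" using nx_eq_iff[OF j 3(2,3)] .
      show ?thesis using 3 j d e r nx_range[OF 3(2,3)] by (auto simp: gd_ww)
    qed
  qed
qed

lemma nbr_all:
  assumes "\<And>t. t \<le> 2*n \<Longrightarrow> gd n s t \<le> r"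
  shows "{t\<in>{0..2*n}. t \<noteq> s \<and> gd n s t \<le> r} = {0..2*n} - {s}"
  using assms by auto

lemma gd0_le2: "t \<le> 2*n \<Longrightarrow> gd n 0 t \<le> 2"
  unfolding gd_def by simp

lemma gdR_le3: "1 \<le> i \<Longrightarrow> i \<le> n \<Longrightarrow> t \<le> 2*n \<Longrightarrow> gd n i t \<le> 3"
  by (cases rule: vcases[of t n]) (auto simp: gd_r0 gd_rr gd_rw)


lemma sum_split:
  fixes g :: "nat \<Rightarrow> nat"
  shows "(\<Sum>s\<in>{0..2*n}. g s) = g 0 + (\<Sum>i\<in>{1..n}. g i) + (\<Sum>j\<in>{1..n}. g (n+j))"
proof -
  have e: "{0..2*n} = insert 0 ({1..n} \<union> (\<lambda>j. n+j) ` {1..n})"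
  proof (rule set_eqI)
    fix x show "x \<in> {0..2*n} \<longleftrightarrow> x \<in> insert 0 ({1..n} \<union> (\<lambda>j. n+j) ` {1..n})"
    proof
      assume "x \<in> {0..2*n}"
      then have "x \<le> 2*n" by simp
      then show "x \<in> insert 0 ({1..n} \<union> (\<lambda>j. n+j) ` {1..n})"
        by (cases rule: vcases) auto
    qed auto
  qed
  have "(\<Sum>s\<in>{0..2*n}. g s) = g 0 + (\<Sum>s\<in>{1..n} \<union> (\<lambda>j. n+j) ` {1..n}. g s)"
    unfolding e by (subst sum.insert) auto
  also have "(\<Sum>s\<in>{1..n} \<union> (\<lambda>j. n+j) ` {1..n}. g s) = (\<Sum>i\<in>{1..n}. g i) + (\<Sum>s\<in>(\<lambda>j. n+j) ` {1..n}. g s)"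
    by (rule sum.union_disjoint) auto
  also have "(\<Sum>s\<in>(\<lambda>j. n+j) ` {1..n}. g s) = (\<Sum>j\<in>{1..n}. g (n+j))"
    by (subst sum.reindex) (auto simp: inj_on_def)
  finally show ?thesis by simp
qed

lemma deg_all:
  assumes "s \<le> 2*n" "\<And>t. t \<le> 2*n \<Longrightarrow> gd n s t \<le> r"
  shows "gdeg {0..2*n} (\<lambda>a b. gd n a b \<le> r) s = 2*n"
  unfolding gdeg_def using nbr_all[of n s r] assms by simp

lemma deg3W:
  assumes n: "n \<ge> 3" and j: "1 \<le> j" "j \<le> n"
  shows "gdeg {0..2*n} (\<lambda>a b. gd n a b \<le> 3) (n+j) = n + 3"
proof -
  have r: "1 \<le> nx n j" "nx n j \<le> n" "1 \<le> pv n j" "pv n j \<le> n" using nx_range[OF j] pv_range[OF j] by auto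
  have d: "nx n j \<noteq> pv n j" using nx_ne_pv n j by auto
  show ?thesis unfolding gdeg_def nbr_W3[OF n j] using r d by simp
qed

lemma deg2R:
  assumes n: "n \<ge> 3" and i: "1 \<le> i" "i \<le> n"
  shows "gdeg {0..2*n} (\<lambda>a b. gd n a b \<le> 2) i = n + 2"
proof -
  have r: "1 \<le> pv n i" "pv n i \<le> n" using pv_range[OF i] by auto
  have d: "pv n i \<noteq> i" using pv_ne n i by auto
  have c: "card ({1..n} - {i}) = n - 1" using i by simp
  show ?thesis unfolding gdeg_def nbr_R2[OF n i] using r d c i by simp
qed

lemma deg2W:
  assumes n: "n \<ge> 3" and j: "1 \<le> j" "j \<le> n"
  shows "gdeg {0..2*n} (\<lambda>a b. gd n a b \<le> 2) (n+j) = 5"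
proof -
  have r: "1 \<le> nx n j" "nx n j \<le> n" "1 \<le> pv n j" "pv n j \<le> n" using nx_range[OF j] pv_range[OF j] by auto
  have d: "nx n j \<noteq> pv n j" "nx n j \<noteq> j" using nx_ne_pv nx_ne n j by auto
  show ?thesis unfolding gdeg_def nbr_W2[OF n j] using r d j by simp
qed

lemma degsum4: "n \<ge> 3 \<Longrightarrow> (\<Sum>s\<in>{0..2*n}. gdeg {0..2*n} (\<lambda>a b. gd n a b \<le> 4) s) = (2*n+1)*(2*n)"
proof -
  assume n: "n \<ge> 3"
  have "(\<Sum>s\<in>{0..2*n}. gdeg {0..2*n} (\<lambda>a b. gd n a b \<le> 4) s) = (\<Sum>s\<in>{0..2*n}. 2*n)"
    using deg_all[of _ n 4] gd_le4 by (intro sum.cong) auto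
  then show ?thesis by simp
qed

lemma degsum3: "n \<ge> 3 \<Longrightarrow> (\<Sum>s\<in>{0..2*n}. gdeg {0..2*n} (\<lambda>a b. gd n a b \<le> 3) s) = 2*n + n*(2*n) + n*(n+3)"
proof -
  assume n: "n \<ge> 3"
  let ?g = "gdeg {0..2*n} (\<lambda>a b. gd n a b \<le> 3)"
  have "?g 0 = 2*n" using deg_all[of 0 n 3] gd0_le2[of _ n] by fastforce
  moreover have "(\<Sum>i\<in>{1..n}. ?g i) = (\<Sum>i\<in>{1..n}. 2*n)"
    using deg_all[of _ n 3] gdR_le3 by (intro sum.cong) auto
  moreover have "(\<Sum>j\<in>{1..n}. ?g (n+j)) = (\<Sum>j\<in>{1..n}. n+3)"
    using deg3W[OF n] by (intro sum.cong) auto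
  ultimately show ?thesis using sum_split[of ?g n] by simp
qed

lemma degsum2: "n \<ge> 3 \<Longrightarrow> (\<Sum>s\<in>{0..2*n}. gdeg {0..2*n} (\<lambda>a b. gd n a b \<le> 2) s) = 2*n + n*(n+2) + n*5"
proof -
  assume n: "n \<ge> 3"
  let ?g = "gdeg {0..2*n} (\<lambda>a b. gd n a b \<le> 2)"
  have "?g 0 = 2*n" using deg_all[of 0 n 2] gd0_le2[of _ n] by fastforce
  moreover have "(\<Sum>i\<in>{1..n}. ?g i) = (\<Sum>i\<in>{1..n}. n+2)"
    using deg2R[OF n] by (intro sum.cong) auto
  moreover have "(\<Sum>j\<in>{1..n}. ?g (n+j)) = (\<Sum>j\<in>{1..n}. 5)"
    using deg2W[OF n] by (intro sum.cong) auto
  ultimately show ?thesis using sum_split[of ?g n] by simp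
qed


lemma cyc_gen:
  assumes J: "J \<subseteq> {1..n}" and nc: "\<forall>j\<in>J. nx n j \<notin> J"
    and X: "X \<subseteq> {1..n}" "X \<inter> J = {}" "X \<inter> nx n ` J = {}"
  shows "2 * card J + card X \<le> n"
proof -
  have fJ: "finite J" using J finite_subset by blast
  have fX: "finite X" using X finite_subset by blast
  have inj: "inj_on (nx n) J"
  proof (rule inj_onI)
    fix x y assume "x \<in> J" "y \<in> J" "nx n x = nx n y"
    then show "x = y" using J nx_inj[of x n y] by (meson atLeastAtMost_iff subsetD)
  qed
  have cJ: "card (nx n ` J) = card J" using inj by (simp add: card_image)
  have d1: "J \<inter> nx n ` J = {}" using nc by blast
  have s2: "nx n ` J \<subseteq> {1..n}"
  proof
    fix y assume "y \<in> nx n ` J"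
    then obtain j where "j \<in> J" "y = nx n j" by blast
    then show "y \<in> {1..n}" using J nx_range[of j n] by auto
  qed
  have sub: "J \<union> nx n ` J \<union> X \<subseteq> {1..n}" using J X(1) s2 by blast
  have d2: "(J \<union> nx n ` J) \<inter> X = {}" using X(2,3) by blast
  have c1: "card (J \<union> nx n ` J) = card J + card (nx n ` J)"
    using fJ d1 by (simp add: card_Un_disjoint)
  have "card (J \<union> nx n ` J \<union> X) = card (J \<union> nx n ` J) + card X"
    using fJ fX d2 by (simp add: card_Un_disjoint)
  moreover have "card (J \<union> nx n ` J \<union> X) \<le> card {1..n}" by (rule card_mono[OF _ sub]) simp
  ultimately show ?thesis using cJ c1 by simp
qed

lemma cyc1:
  assumes J: "J \<subseteq> {1..n}" and nc: "\<forall>j\<in>J. nx n j \<notin> J"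
  shows "2 * card J \<le> n"
  using cyc_gen[OF J nc, of "{}"] by simp

lemma cyc2:
  assumes J: "J \<subseteq> {1..n}" and nc: "\<forall>j\<in>J. nx n j \<notin> J"
    and a: "1 \<le> a" "a \<le> n" "a \<notin> J" "nx n a \<notin> J"
  shows "2 * card J + 1 \<le> n"
proof -
  have "nx n a \<notin> nx n ` J"
  proof
    assume "nx n a \<in> nx n ` J"
    then obtain j where "j \<in> J" "nx n a = nx n j" by auto
    then have "a = j" using nx_inj[OF a(1,2)] J by auto
    then show False using a(3) \<open>j \<in> J\<close> by simp
  qed
  moreover have "{nx n a} \<subseteq> {1..n}" using nx_range[OF a(1,2)] by simp
  ultimately have "2 * card J + card {nx n a} \<le> n" using cyc_gen[OF J nc, of "{nx n a}"] a(4) by blast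
  then show ?thesis by simp
qed

lemma Wpart:
  assumes n: "n \<ge> 3" and r: "r \<ge> 2" and SV: "S \<subseteq> {0..2*n}" and W: "\<forall>s\<in>S. n < s"
    and ind: "indep (\<lambda>a b. gd n a b \<le> r) S"
  shows "card ((\<lambda>s. s - n) ` S) = card S \<and> (\<lambda>s. s - n) ` S \<subseteq> {1..n} \<and>
     (\<forall>j\<in>(\<lambda>s. s - n) ` S. nx n j \<notin> (\<lambda>s. s - n) ` S)"
proof (intro conjI)
  have inj: "inj_on (\<lambda>s. s - n) S"
  proof (rule inj_onI)
    fix s t assume "s \<in> S" "t \<in> S" "s - n = t - n"
    moreover have "n < s" "n < t" using W \<open>s \<in> S\<close> \<open>t \<in> S\<close> by auto
    ultimately show "s = t" by arith
  qed
  then show "card ((\<lambda>s. s - n) ` S) = card S" by (rule card_image)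
  show "(\<lambda>s. s - n) ` S \<subseteq> {1..n}"
  proof
    fix y assume "y \<in> (\<lambda>s. s - n) ` S"
    then obtain s where "s \<in> S" "y = s - n" by blast
    moreover have "n < s" "s \<le> 2*n" using W SV \<open>s \<in> S\<close> by auto
    ultimately have "1 \<le> y" "y \<le> n" by arith+
    then show "y \<in> {1..n}" by simp
  qed
  show "\<forall>j\<in>(\<lambda>s. s - n) ` S. nx n j \<notin> (\<lambda>s. s - n) ` S"
  proof (intro ballI notI)
    fix j assume "j \<in> (\<lambda>s. s - n) ` S" "nx n j \<in> (\<lambda>s. s - n) ` S"
    then obtain s t where st: "s \<in> S" "t \<in> S" "j = s - n" "nx n j = t - n" by blast
    have ns: "n < s" "s \<le> 2*n" "n < t" using W SV st(1,2) by auto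
    have j: "1 \<le> j" "j \<le> n" using ns st(3) by auto
    have s: "s = n + j" using ns st(3) by simp
    have t: "t = n + nx n j" using ns st(4) by simp
    have ne: "nx n j \<noteq> j" using nx_ne n j by auto
    then have "s \<noteq> t" using s t by simp
    moreover have "gd n s t = 2"
    proof -
      have "1 \<le> nx n j" using nx_range[OF j] by simp
      then show ?thesis using s t j ne by (simp add: gd_ww)
    qed
    ultimately show False using ind st(1,2) r unfolding indep_def by fastforce
  qed
qed

lemma single:
  assumes "x \<in> S" "S \<subseteq> V" "indep R S" "\<And>y. y \<in> V \<Longrightarrow> R x y"
  shows "S = {x}"
proof -
  have "\<And>y. y \<in> S \<Longrightarrow> y = x"
  proof (rule ccontr)
    fix y assume y: "y \<in> S" "y \<noteq> x"
    have "R x y" using assms(2,4) y(1) by blast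
    moreover have "\<not> R x y" using assms(3) assms(1) y unfolding indep_def by metis
    ultimately show False by simp
  qed
  then show ?thesis using assms(1) by blast
qed


lemma indep_sub: "indep R S \<Longrightarrow> T \<subseteq> S \<Longrightarrow> indep R T"
  unfolding indep_def by blast

lemma sum_const_on:
  fixes g :: "nat \<Rightarrow> nat"
  shows "(\<And>s. s \<in> S \<Longrightarrow> g s = c) \<Longrightarrow> (\<Sum>s\<in>S. g s) = c * card S"
  by (simp add: sum.cong[of S S g "\<lambda>_. c"])

lemma Wsum:
  fixes g :: "nat \<Rightarrow> nat"
  assumes n: "n \<ge> 3" and W: "\<forall>s\<in>S. n < s" and SV: "S \<subseteq> {0..2*n}"
    and d: "\<And>j. 1 \<le> j \<Longrightarrow> j \<le> n \<Longrightarrow> g (n+j) = c"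
  shows "(\<Sum>s\<in>S. g s) = c * card S"
proof (rule sum_const_on)
  fix s assume s: "s \<in> S"
  then have "n < s" "s \<le> 2*n" using W SV by auto
  then have "s = n + (s - n)" "1 \<le> s - n" "s - n \<le> n" by arith+
  then show "g s = c" using d by metis
qed

lemma best4:
  assumes n: "n \<ge> 3" and SV: "S \<subseteq> {0..2*n}" and ind: "indep (\<lambda>a b. gd n a b \<le> 4) S"
  shows "(\<Sum>s\<in>S. gdeg {0..2*n} (\<lambda>a b. gd n a b \<le> 4) s) \<le> 2*n"
proof (cases "S = {}")
  case True then show ?thesis by simp
next
  case False then obtain x where x: "x \<in> S" by blast
  have "S = {x}" by (rule single[OF x SV ind]) (simp add: gd_le4)
  moreover have "x \<le> 2*n" using x SV by auto
  ultimately show ?thesis using deg_all[of x n 4] gd_le4 by simp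
qed

lemma arith3: "n \<ge> (3::nat) \<Longrightarrow> 2*n \<le> (n+3)*(n div 2)"
proof -
  assume n: "n \<ge> 3"
  define k where "k = n div 2"
  have k: "1 \<le> k" "n \<le> 2*k+1" unfolding k_def using n by auto
  have "n * 1 \<le> n * k" using k(1) by (rule mult_le_mono2)
  moreover have "(n+3)*k = n*k + 3*k" by (simp add: algebra_simps)
  ultimately show ?thesis using k unfolding k_def[symmetric] by linarith
qed

lemma best3:
  assumes n: "n \<ge> 3" and SV: "S \<subseteq> {0..2*n}" and ind: "indep (\<lambda>a b. gd n a b \<le> 3) S"
  shows "(\<Sum>s\<in>S. gdeg {0..2*n} (\<lambda>a b. gd n a b \<le> 3) s) \<le> (n+3)*(n div 2)"
proof (cases "\<exists>x\<in>S. x \<le> n")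
  case True then obtain x where x: "x\<in>S" "x \<le> n" by blast
  have all: "\<And>y. y \<in> {0..2*n} \<Longrightarrow> gd n x y \<le> 3"
  proof -
    fix y assume y: "y \<in> {0..2*n}"
    show "gd n x y \<le> 3"
    proof (cases "x = 0")
      case True then show ?thesis using gd0_le2[of y n] y by simp
    next
      case False then show ?thesis using gdR_le3[of x n y] x y by simp
    qed
  qed
  have "S = {x}" by (rule single[OF x(1) SV ind all])
  then have "(\<Sum>s\<in>S. gdeg {0..2*n} (\<lambda>a b. gd n a b \<le> 3) s) = 2*n"
    using deg_all[of x n 3] all x(2) by simp
  then show ?thesis using arith3[OF n] by simp
next
  case False then have W: "\<forall>s\<in>S. n < s" by auto
  have c: "card ((\<lambda>s. s - n) ` S) = card S" "(\<lambda>s. s - n) ` S \<subseteq> {1..n}"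
    "\<forall>j\<in>(\<lambda>s. s - n) ` S. nx n j \<notin> (\<lambda>s. s - n) ` S"
    using Wpart[OF n _ SV W ind] by auto
  have "2 * card S \<le> n" using cyc1[OF c(2,3)] c(1) by simp
  then have cs: "card S \<le> n div 2" by linarith
  have "(\<Sum>s\<in>S. gdeg {0..2*n} (\<lambda>a b. gd n a b \<le> 3) s) = (n+3) * card S"
    by (rule Wsum[OF n W SV]) (rule deg3W[OF n])
  also have "\<dots> \<le> (n+3) * (n div 2)" using cs by (rule mult_le_mono2)
  finally show ?thesis .
qed


lemma best2:
  assumes n: "n \<ge> 3" and SV: "S \<subseteq> {0..2*n}" and ind: "indep (\<lambda>a b. gd n a b \<le> 2) S"
  shows "(\<Sum>s\<in>S. gdeg {0..2*n} (\<lambda>a b. gd n a b \<le> 2) s) \<le> (n+2) + 5*((n-1) div 2)"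
proof -
  let ?g = "gdeg {0..2*n} (\<lambda>a b. gd n a b \<le> 2)"
  have m1: "n - 1 = 2*((n-1) div 2) + (n-1) mod 2" by simp
  have m2: "(n-1) mod 2 \<le> 1" by simp
  have m3: "n = 2*(n div 2) + n mod 2" by simp
  have m4: "n mod 2 \<le> 1" by simp
  have ar1: "2*n \<le> (n+2) + 5*((n-1) div 2)" using n m1 m2 by linarith
  have ar2: "5*(n div 2) \<le> (n+2) + 5*((n-1) div 2)" using n m1 m2 m3 m4 by linarith
  have h: "0 \<notin> S \<Longrightarrow> \<not>(\<exists>i\<in>S. 1 \<le> i \<and> i \<le> n) \<Longrightarrow> \<forall>s\<in>S. n < s"
  proof (intro ballI)
    fix s assume a: "0 \<notin> S" "\<not>(\<exists>i\<in>S. 1 \<le> i \<and> i \<le> n)" "s \<in> S"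
    then have "s \<noteq> 0" by metis
    then have "1 \<le> s" by linarith
    then have "\<not> s \<le> n" using a by auto
    then show "n < s" by simp
  qed
  consider "0 \<in> S" | "0 \<notin> S" "\<exists>i\<in>S. 1 \<le> i \<and> i \<le> n" | "\<forall>s\<in>S. n < s"
    using h by blast
  then show ?thesis
  proof cases
    case 1
    have all: "\<And>y. y \<in> {0..2*n} \<Longrightarrow> gd n 0 y \<le> 2" using gd0_le2 by simp
    have "S = {0}" by (rule single[OF 1 SV ind all])
    then have "(\<Sum>s\<in>S. ?g s) = 2*n" using deg_all[of 0 n 2] all by simp
    then show ?thesis using ar1 by simp
  next
    case 2
    then obtain i where i: "i \<in> S" "1 \<le> i" "i \<le> n" by blast
    let ?S' = "S - {i}"
    have S'V: "?S' \<subseteq> {0..2*n}" using SV by blast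
    have ind': "indep (\<lambda>a b. gd n a b \<le> 2) ?S'" using ind by (rule indep_sub) blast
    have ii: "\<forall>a\<in>S. \<forall>b\<in>S. a \<noteq> b \<longrightarrow> \<not> gd n a b \<le> 2" using ind unfolding indep_def by simp
    have nadj: "\<And>s. s \<in> ?S' \<Longrightarrow> \<not> gd n i s \<le> 2"
    proof -
      fix s assume "s \<in> ?S'"
      then have "s \<in> S" "i \<noteq> s" by auto
      then show "\<not> gd n i s \<le> 2" using ii i(1) by blast
    qed
    have W: "\<forall>s\<in>?S'. n < s"
    proof
      fix s assume s: "s \<in> ?S'"
      show "n < s"
      proof (rule ccontr)
        assume "\<not> n < s"
        moreover have "s \<noteq> 0" using s 2(1) by (metis DiffD1)
        ultimately have "1 \<le> s" "s \<le> n" by auto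
        then have "gd n i s = 2" using gd_rr[OF i(2,3)] s by auto
        then show False using nadj[OF s] by simp
      qed
    qed
    let ?J = "(\<lambda>s. s - n) ` ?S'"
    have c: "card ?J = card ?S'" "?J \<subseteq> {1..n}" "\<forall>j\<in>?J. nx n j \<notin> ?J"
      using Wpart[OF n _ S'V W ind'] by auto
    have pr: "1 \<le> pv n i" "pv n i \<le> n" using pv_range[OF i(2,3)] by auto
    have nxp: "nx n (pv n i) = i" using nx_pv[OF i(2,3)] .
    have "pv n i \<notin> ?J"
    proof
      assume "pv n i \<in> ?J"
      then obtain s where s: "s \<in> ?S'" "pv n i = s - n" by blast
      have "n < s" using W s(1) by blast
      then have "s = n + pv n i" using s(2) by simp
      then have "gd n i s = 1" using gd_rw[OF i(2,3) pr(1)] nxp by simp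
      then show False using nadj[OF s(1)] by simp
    qed
    moreover have "i \<notin> ?J"
    proof
      assume "i \<in> ?J"
      then obtain s where s: "s \<in> ?S'" "i = s - n" by blast
      have "n < s" using W s(1) by blast
      then have "s = n + i" using s(2) by simp
      then have "gd n i s = 1" using gd_rw[OF i(2,3) i(2)] by simp
      then show False using nadj[OF s(1)] by simp
    qed
    ultimately have "2 * card ?J + 1 \<le> n" using cyc2[OF c(2,3) pr] nxp by simp
    then have cs: "card ?S' \<le> (n-1) div 2" using c(1) by linarith
    have fS: "finite S" using SV finite_subset by blast
    have "(\<Sum>s\<in>S. ?g s) = ?g i + (\<Sum>s\<in>?S'. ?g s)"
      using fS i(1) by (simp add: sum.remove)
    also have "?g i = n + 2" by (rule deg2R[OF n i(2,3)])
    also have "(\<Sum>s\<in>?S'. ?g s) = 5 * card ?S'"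
      by (rule Wsum[OF n W S'V]) (rule deg2W[OF n])
    finally show ?thesis using cs by linarith
  next
    case 3
    have c: "card ((\<lambda>s. s - n) ` S) = card S" "(\<lambda>s. s - n) ` S \<subseteq> {1..n}"
      "\<forall>j\<in>(\<lambda>s. s - n) ` S. nx n j \<notin> (\<lambda>s. s - n) ` S"
      using Wpart[OF n _ SV 3 ind] by auto
    have "2 * card S \<le> n" using cyc1[OF c(2,3)] c(1) by simp
    then have cs: "card S \<le> n div 2" by linarith
    have "(\<Sum>s\<in>S. ?g s) = 5 * card S"
      by (rule Wsum[OF n 3 SV]) (rule deg2W[OF n])
    then show ?thesis using cs ar2 by linarith
  qed
qed




lemma nx_even: "1 \<le> j \<Longrightarrow> 2*j \<le> n \<Longrightarrow> 1 \<le> k \<Longrightarrow> nx n (2*j) \<noteq> 2*k"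
  unfolding nx_def by presburger

lemma Wind:
  assumes n: "n \<ge> 3" and r: "r \<le> 3" and m: "2*m \<le> n"
  shows "indep (\<lambda>a b. gd n a b \<le> r) ((\<lambda>j. n + 2*j) ` {1..m})"
  unfolding indep_def
proof (intro ballI impI)
  fix a b assume a: "a \<in> (\<lambda>j. n + 2*j) ` {1..m}" and b: "b \<in> (\<lambda>j. n + 2*j) ` {1..m}" and ab: "a \<noteq> b"
  obtain j where j: "a = n + 2*j" "1 \<le> j" "j \<le> m" using a by auto
  obtain k where k: "b = n + 2*k" "1 \<le> k" "k \<le> m" using b by auto
  have "nx n (2*j) \<noteq> 2*k" using nx_even[of j n k] j k m by simp
  moreover have "nx n (2*k) \<noteq> 2*j" using nx_even[of k n j] j k m by simp
  ultimately have "gd n a b = 4" using j k ab by (simp add: gd_ww)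
  then show "\<not> gd n a b \<le> r" using r by simp
qed

lemma Wcard: "card ((\<lambda>j::nat. (n::nat) + 2*j) ` {1..m}) = m"
  by (subst card_image) (auto simp: inj_on_def)
lemma Wcard_old: "card ((\<lambda>j. n + 2*j) ` {1..m}) = m"
  by (subst card_image) (auto simp: inj_on_def)

lemma Wsub: "2*(m::nat) \<le> n \<Longrightarrow> (\<lambda>j. n + 2*j) ` {1..m} \<subseteq> {0..2*n}"
  by auto

lemma Wgt: "\<forall>s\<in>(\<lambda>j. (n::nat) + 2*j) ` {1..m}. n < s"
  by auto

lemma sym_gd: "gd n a b \<le> r \<Longrightarrow> gd n b a \<le> r"
  using gd_sym by metis

lemma res4:
  assumes n: "n \<ge> 3"
  shows "sparing_number {0..2*n} (gE {0..2*n} (\<lambda>a b. gd n a b \<le> 4)) + 2*n = card (gE {0..2*n} (\<lambda>a b. gd n a b \<le> 4))"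
proof -
  have "sparing_number {0..2*n} (gE {0..2*n} (\<lambda>a b. gd n a b \<le> 4)) + (\<Sum>s\<in>{0}. gdeg {0..2*n} (\<lambda>a b. gd n a b \<le> 4) s)
      = card (gE {0..2*n} (\<lambda>a b. gd n a b \<le> 4))"
  proof (rule sparing_gen)
    show "indep (\<lambda>a b. gd n a b \<le> 4) {0}" unfolding indep_def by simp
    fix S assume "S \<subseteq> {0..2*n}" "indep (\<lambda>a b. gd n a b \<le> 4) S"
    then show "(\<Sum>s\<in>S. gdeg {0..2*n} (\<lambda>a b. gd n a b \<le> 4) s) \<le> (\<Sum>s\<in>{0}. gdeg {0..2*n} (\<lambda>a b. gd n a b \<le> 4) s)"
      using best4[OF n] deg_all[of 0 n 4] gd_le4 by simp
  qed (auto intro: sym_gd)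
  then show ?thesis using deg_all[of 0 n 4] gd_le4 by simp
qed

lemma res3:
  assumes n: "n \<ge> 3"
  shows "sparing_number {0..2*n} (gE {0..2*n} (\<lambda>a b. gd n a b \<le> 3)) + (n+3)*(n div 2) = card (gE {0..2*n} (\<lambda>a b. gd n a b \<le> 3))"
proof -
  let ?S0 = "(\<lambda>j. n + 2*j) ` {1..n div 2}"
  let ?g = "gdeg {0..2*n} (\<lambda>a b. gd n a b \<le> 3)"
  have m: "2*(n div 2) \<le> n" by simp
  have s0: "(\<Sum>s\<in>?S0. ?g s) = (n+3)*(n div 2)"
    using Wsum[OF n Wgt Wsub[OF m], of ?g "n+3"] deg3W[OF n] Wcard by simp
  have "sparing_number {0..2*n} (gE {0..2*n} (\<lambda>a b. gd n a b \<le> 3)) + (\<Sum>s\<in>?S0. ?g s)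
      = card (gE {0..2*n} (\<lambda>a b. gd n a b \<le> 3))"
  proof (rule sparing_gen)
    show "indep (\<lambda>a b. gd n a b \<le> 3) ?S0" by (rule Wind[OF n _ m]) simp
    show "?S0 \<subseteq> {0..2*n}" by (rule Wsub[OF m])
    fix S assume "S \<subseteq> {0..2*n}" "indep (\<lambda>a b. gd n a b \<le> 3) S"
    then show "(\<Sum>s\<in>S. ?g s) \<le> (\<Sum>s\<in>?S0. ?g s)" using best3[OF n] s0 by simp
  qed (auto intro: sym_gd)
  then show ?thesis using s0 by simp
qed

lemma res2:
  assumes n: "n \<ge> 3"
  shows "sparing_number {0..2*n} (gE {0..2*n} (\<lambda>a b. gd n a b \<le> 2)) + ((n+2) + 5*((n-1) div 2)) = card (gE {0..2*n} (\<lambda>a b. gd n a b \<le> 2))"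
proof -
  let ?W = "(\<lambda>j. n + 2*j) ` {1..(n-1) div 2}"
  let ?S0 = "insert 1 ?W"
  let ?g = "gdeg {0..2*n} (\<lambda>a b. gd n a b \<le> 2)"
  have m: "2*((n-1) div 2) \<le> n" by linarith
  have m2: "2*((n-1) div 2) < n" using n by linarith
  have sW: "(\<Sum>s\<in>?W. ?g s) = 5*((n-1) div 2)"
    using Wsum[OF n Wgt Wsub[OF m], of ?g 5] deg2W[OF n] Wcard by simp
  have nin: "1 \<notin> ?W" by auto
  have s0: "(\<Sum>s\<in>?S0. ?g s) = (n+2) + 5*((n-1) div 2)"
    using sW nin deg2R[OF n, of 1] n by (simp add: sum.insert)
  have ind0: "indep (\<lambda>a b. gd n a b \<le> 2) ?S0"
  proof -
    have iw: "indep (\<lambda>a b. gd n a b \<le> 2) ?W" by (rule Wind[OF n _ m]) simp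
    have "\<And>b. b \<in> ?W \<Longrightarrow> gd n 1 b = 3"
    proof -
      fix b assume "b \<in> ?W"
      then obtain j where j: "b = n + 2*j" "1 \<le> j" "j \<le> (n-1) div 2" by auto
      have "2*j < n" using j m2 by linarith
      then have "nx n (2*j) = 2*j + 1" unfolding nx_def by simp
      then show "gd n 1 b = 3" using j n by (simp add: gd_rw)
    qed
    then have "\<And>b. b \<in> ?W \<Longrightarrow> gd n 1 b = 3 \<and> gd n b 1 = 3" using gd_sym by metis
    then show ?thesis using iw unfolding indep_def by fastforce
  qed
  have "sparing_number {0..2*n} (gE {0..2*n} (\<lambda>a b. gd n a b \<le> 2)) + (\<Sum>s\<in>?S0. ?g s)
      = card (gE {0..2*n} (\<lambda>a b. gd n a b \<le> 2))"
  proof (rule sparing_gen)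
    show "indep (\<lambda>a b. gd n a b \<le> 2) ?S0" by (rule ind0)
    show "?S0 \<subseteq> {0..2*n}" using Wsub[OF m] n by simp
    fix S assume "S \<subseteq> {0..2*n}" "indep (\<lambda>a b. gd n a b \<le> 2) S"
    then show "(\<Sum>s\<in>S. ?g s) \<le> (\<Sum>s\<in>?S0. ?g s)" using best2[OF n] s0 by simp
  qed (auto intro: sym_gd)
  then show ?thesis using s0 by simp
qed




lemma ar2:
  fixes n sp c :: nat
  assumes n: "n \<ge> 3" and e: "sp + ((n+2) + 5*((n-1) div 2)) = c" and h: "2*c = 2*n + n*(n+2) + n*5"
  shows "real sp = (if even n then (real ((n + 1)^2) + 5) / 2 else real ((n + 1)^2) / 2)"
proof -
  have A: "real sp + (real n + 2 + 5*real ((n-1) div 2)) = real c" using arg_cong[OF e, of real] by (simp only: of_nat_add of_nat_mult of_nat_numeral)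
  have B: "2*real c = 2*real n + real n*(real n+2) + real n*5" using arg_cong[OF h, of real] by (simp only: of_nat_add of_nat_mult of_nat_numeral)
  have C: "2*real sp = (2*real n + real n*(real n+2) + real n*5) - 2*(real n + 2 + 5*real ((n-1) div 2))"
  proof -
    have "real sp = real c - (real n + 2 + 5*real ((n-1) div 2))" using A by (simp only: eq_diff_eq)
    then show ?thesis by (simp only: right_diff_distrib B)
  qed
  show ?thesis
  proof (cases "even n")
    case True
    then obtain m where m: "n = 2*m" by blast
    define k where "k = m - 1"
    have k: "n = 2*k + 2" using m n unfolding k_def by simp
    have d: "(n-1) div 2 = k" using k by simp
    have "2*real sp = (real n + 1)^2 + 5" using C unfolding d k by (simp add: power2_eq_square algebra_simps)
    moreover have "real ((n + 1)^2) = (real n + 1)^2" by simp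
    ultimately show ?thesis using True by (simp add: field_simps)
  next
    case False
    then obtain k where k: "n = 2*k + 1" using oddE by blast
    have d: "(n-1) div 2 = k" using k by simp
    have "2*real sp = (real n + 1)^2" using C unfolding d k by (simp add: power2_eq_square algebra_simps)
    moreover have "real ((n + 1)^2) = (real n + 1)^2" by simp
    ultimately show ?thesis using False by (simp add: field_simps)
  qed
qed

lemma ar3:
  fixes n sp c :: nat
  assumes n: "n \<ge> 3" and e: "sp + (n+3)*(n div 2) = c" and h: "2*c = 2*n + n*(2*n) + n*(n+3)"
  shows "real sp = (if even n then real (n * (n + 1)) else real (2 * n^2 + 3 * n + 3) / 2)"
proof -
  have A: "real sp + (real n + 3)*real (n div 2) = real c" using arg_cong[OF e, of real] by (simp only: of_nat_add of_nat_mult of_nat_numeral)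
  have B: "2*real c = 2*real n + real n*(2*real n) + real n*(real n+3)" using arg_cong[OF h, of real] by (simp only: of_nat_add of_nat_mult of_nat_numeral)
  have C: "2*real sp = (2*real n + real n*(2*real n) + real n*(real n+3)) - 2*((real n + 3)*real (n div 2))"
  proof -
    have "real sp = real c - ((real n + 3)*real (n div 2))" using A by (simp only: eq_diff_eq)
    then show ?thesis by (simp only: right_diff_distrib B)
  qed
  show ?thesis
  proof (cases "even n")
    case True
    then obtain k where k: "n = 2*k" by blast
    have d: "n div 2 = k" using k by simp
    have "2*real sp = 2*(real n*(real n+1))" using C unfolding d k by (simp add: power2_eq_square algebra_simps)
    then show ?thesis using True by (simp add: algebra_simps)
  next
    case False
    then obtain k where k: "n = 2*k + 1" using oddE by blast
    have d: "n div 2 = k" using k by simp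
    have "2*real sp = 2*(real n)^2 + 3*real n + 3" using C unfolding d k by (simp add: power2_eq_square algebra_simps)
    then show ?thesis using False by simp
  qed
qed

lemma ar4:
  fixes n sp c :: nat
  assumes n: "n \<ge> 3" and e: "sp + 2*n = c" and h: "2*c = (2*n+1)*(2*n)"
  shows "sp = n * (2 * n - 1)"
proof -
  have A: "real sp + 2*real n = real c" using arg_cong[OF e, of real] by (simp only: of_nat_add of_nat_mult of_nat_numeral)
  have B: "2*real c = (2*real n+1)*(2*real n)" using arg_cong[OF h, of real] by (simp only: of_nat_add of_nat_mult of_nat_numeral of_nat_1)
  have C: "2*real sp = (2*real n+1)*(2*real n) - 4*real n" using A B by linarith
  have "real (n * (2*n - 1)) = real n * (2*real n - 1)" using n by (simp add: of_nat_diff)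
  also have "\<dots> = real sp" using C by (simp add: algebra_simps)
  finally have "real (n * (2*n - 1)) = real sp" .
  then show ?thesis by (simp only: of_nat_eq_iff)
qed


theorem mainTheorem10:
  fixes n :: nat
  assumes "n \<ge> 3"
  shows "real (sparing_number (gear_vertices n) (power_edges (gear_vertices n) (gear_edges n) 2)) =
           (if even n then (real ((n + 1)^2) + 5) / 2 else real ((n + 1)^2) / 2) \<and>
         real (sparing_number (gear_vertices n) (power_edges (gear_vertices n) (gear_edges n) 3)) =
           (if even n then real (n * (n + 1)) else real (2 * n^2 + 3 * n + 3) / 2) \<and>
         sparing_number (gear_vertices n) (power_edges (gear_vertices n) (gear_edges n) 4) =
           n * (2 * n - 1)"
proof -
  have n: "n \<ge> 3" by (rule assms)
  have V: "gear_vertices n = {0..2*n}" by (simp add: gear_vertices_def)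
  have fin: "finite {0..2*n}" by simp
  have P: "\<And>r. power_edges (gear_vertices n) (gear_edges n) r = gE {0..2*n} (\<lambda>a b. gd n a b \<le> r)"
    by (rule power_eq[OF n])
  have h: "\<And>r. 2 * card (gE {0..2*n} (\<lambda>a b. gd n a b \<le> r)) = (\<Sum>s\<in>{0..2*n}. gdeg {0..2*n} (\<lambda>a b. gd n a b \<le> r) s)"
    by (rule handshake[OF fin]) (rule sym_gd)
  have r2: "real (sparing_number {0..2*n} (gE {0..2*n} (\<lambda>a b. gd n a b \<le> 2))) =
           (if even n then (real ((n + 1)^2) + 5) / 2 else real ((n + 1)^2) / 2)"
    by (rule ar2[OF n res2[OF n]]) (use h[of 2] degsum2[OF n] in simp)
  have r3: "real (sparing_number {0..2*n} (gE {0..2*n} (\<lambda>a b. gd n a b \<le> 3))) =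
           (if even n then real (n * (n + 1)) else real (2 * n^2 + 3 * n + 3) / 2)"
    by (rule ar3[OF n res3[OF n]]) (use h[of 3] degsum3[OF n] in simp)
  have r4: "sparing_number {0..2*n} (gE {0..2*n} (\<lambda>a b. gd n a b \<le> 4)) = n * (2 * n - 1)"
    by (rule ar4[OF n res4[OF n]]) (use h[of 4] degsum4[OF n] in simp)
  show ?thesis unfolding P unfolding V using r2 r3 r4 by blast
qed


end
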